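(* For every finite-rank operator $x=\sum_{j,k}x_{jk}|e_j\rangle\langle e_k|$ (finite sum, $j,k\ge0$), \begin{align*} L(x)&=i\sum_{j,k\ge0}\big(\zeta^+(\omega_{j+1}-\omega_{k+1})+\zeta^-(\omega_j-\omega_k)\big)x_{jk}|e_j\rangle\langle e_k|\\ &\quad+\sum_{j,k\ge0}\Big(\mu\lambda(\omega_k\omega_j)^{1/2}x_{j-1\,k-1}-\tfrac{\mu^2}{2}(\omega_j+\omega_k)x_{jk}\\ &\qquad\qquad+\mu\lambda(\omega_{j+1}\omega_{k+1})^{1/2}x_{j+1\,k+1}-\tfrac{\lambda^2}{2}(\omega_{j+1}+\omega_{k+1})x_{jk}\Big)|e_j\rangle\langle e_k|, \end{align*} with the convention $x_{j-1\,k-1}=0$ if $j=0$ or $k=0$.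
   Context: Let $\mathsf h=\ell^2(\mathbb N)$ with canonical orthonormal basis $(e_n)_{n\ge0}$, $Ne_n=ne_n$. Fix $r>0$, $\omega_n=n(n+r-1)$. On $\mathrm{Dom}(N)$ define $Be_n=\omega_n^{1/2}e_{n-1}$ ($n\ge1$), $Be_0=0$, $B^+e_n=\omega_{n+1}^{1/2}e_{n+1}$. Fix real $0<\lambda<\mu$ and $\zeta^\pm\in\mathbb R$, and put $\nu=\lambda/\mu$. Let $G$ on $\mathrm{Dom}(N^2)$ be $Ge_n=-\big((\tfrac{\lambda^2}{2}+i\zeta^+)\omega_{n+1}+(\tfrac{\mu^2}{2}+i\zeta^-)\omega_n\big)e_n$, $P_t=e^{tG}$, $L_1=\mu B$, $L_2=\lambda B^+$, and let $\mathcal T$ be the minimal quantum dynamical semigroup associated with $G,L_1,L_2$ (the minimal solution of $\langle v,\mathcal T_t(x)u\rangle=\langle P_tv,xP_tu\rangle+\sum_{\ell=1}^2\int_0^t\langle L_\ell P_{t-s}v,\mathcal T_s(x)L_\ell P_{t-s}u\rangle ds$), a quantum Markov semigroup with generator $\mathcal L$, formally $\mathcal L(x)=-\frac{\lambda^2}{2}(BB^+x-2BxB^++xBB^+)-\frac{\mu^2}{2}(B^+Bx-2B^+xB+xB^+B)+i[\zeta^+BB^++\zeta^-B^+B,x]$. Let $\rho=(1-\nu^2)\sum_n\nu^{2n}|e_n\rangle\langle e_n|$ (its invariant state). Let $L_2(\mathsf h)$ be the Hilbert–Schmidt operators with $\langle x,y\rangle=\mathrm{tr}(x^*y)$, $\iota(x)=\rho^{1/4}x\rho^{1/4}$,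 and let $T=(T_t)$ be the strongly continuous contraction semigroup on $L_2(\mathsf h)$ determined by $T_t(\iota(x))=\iota(\mathcal T_t(x))$, with generator $L$; thus $L(\rho^{1/4}x\rho^{1/4})=\rho^{1/4}\mathcal L(x)\rho^{1/4}$ for $x\in\mathrm{Dom}(\mathcal L)$. *)

theory Defs
  imports "HOL-Analysis.Analysis"
begin

text \<open>Operators on h = l2(N) are represented by their matrices w.r.t. the canonical
basis: a :: nat => nat => complex, a j k = <e_j, a e_k>, i.e. a = sum a j k |e_j><e_k|.
Hilbert-Schmidt operators L_2(h) are exactly the square-summable matrices, with
||a||_2^2 = sum_{j,k} |a j k|^2.\<close>

definition omega :: "real \<Rightarrow> nat \<Rightarrow> real" where
  "omega r n = real n * (real n + r - 1)"

text \<open>Diagonal entries of G: G e_n = gdiag n e_n.\<close>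
definition gdiag :: "real \<Rightarrow> real \<Rightarrow> real \<Rightarrow> real \<Rightarrow> real \<Rightarrow> nat \<Rightarrow> complex" where
  "gdiag r lam mu zp zm n =
     - ((complex_of_real (lam^2/2) + \<i> * complex_of_real zp) * complex_of_real (omega r (Suc n))
      + (complex_of_real (mu^2/2) + \<i> * complex_of_real zm) * complex_of_real (omega r n))"

definition pdiag :: "real \<Rightarrow> real \<Rightarrow> real \<Rightarrow> real \<Rightarrow> real \<Rightarrow> real \<Rightarrow> nat \<Rightarrow> complex" where
  "pdiag r lam mu zp zm t n = exp (complex_of_real t * gdiag r lam mu zp zm n)"

text \<open>Iterates of the minimal-semigroup construction, matrix entry (j,k):
  T0_t(x) = P_t^* x P_t,
  T(n+1)_t(x) = P_t^* x P_t + int_0^t sum_l P_{t-s}^* L_l^* T(n)_s(x) L_l P_{t-s} ds,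
with L_1 = mu B, L_2 = lam B^+, so that
  <L_1 e_j, Y L_1 e_k> = mu^2 sqrt(omega_j omega_k) Y_{j-1,k-1} (0 if j=0 or k=0),
  <L_2 e_j, Y L_2 e_k> = lam^2 sqrt(omega_{j+1} omega_{k+1}) Y_{j+1,k+1}.\<close>
fun Tit :: "real \<Rightarrow> real \<Rightarrow> real \<Rightarrow> real \<Rightarrow> real \<Rightarrow> (nat \<Rightarrow> nat \<Rightarrow> complex)
              \<Rightarrow> nat \<Rightarrow> real \<Rightarrow> nat \<Rightarrow> nat \<Rightarrow> complex" where
  "Tit r lam mu zp zm x 0 t j k =
     cnj (pdiag r lam mu zp zm t j) * x j k * pdiag r lam mu zp zm t k"
| "Tit r lam mu zp zm x (Suc n) t j k =
     cnj (pdiag r lam mu zp zm t j) * x j k * pdiag r lam mu zp zm t k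
     + integral {0..t} (\<lambda>s. cnj (pdiag r lam mu zp zm (t - s) j) * pdiag r lam mu zp zm (t - s) k *
         ((if j = 0 \<or> k = 0 then 0
           else complex_of_real (mu^2 * sqrt (omega r j * omega r k)) * Tit r lam mu zp zm x n s (j - 1) (k - 1))
          + complex_of_real (lam^2 * sqrt (omega r (Suc j) * omega r (Suc k))) * Tit r lam mu zp zm x n s (Suc j) (Suc k)))"

text \<open>Minimal quantum dynamical semigroup: T_t(x) = lim_n T(n)_t(x) (weak*-limit,
in particular entrywise limit; for x >= 0 it is the supremum of the increasing iterates).\<close>
definition Tmin :: "real \<Rightarrow> real \<Rightarrow> real \<Rightarrow> real \<Rightarrow> real \<Rightarrow> (nat \<Rightarrow> nat \<Rightarrow> complex)
              \<Rightarrow> real \<Rightarrow> nat \<Rightarrow> nat \<Rightarrow> complex" where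
  "Tmin r lam mu zp zm x t j k = lim (\<lambda>n. Tit r lam mu zp zm x n t j k)"

text \<open>Invariant state rho = (1-nu^2) sum nu^(2n) |e_n><e_n|, nu = lam/mu (diagonal entries).\<close>
definition rhod :: "real \<Rightarrow> real \<Rightarrow> nat \<Rightarrow> real" where
  "rhod lam mu n = (1 - (lam/mu)^2) * (lam/mu)^(2*n)"

text \<open>iota(x) = rho^{1/4} x rho^{1/4} and its inverse on matrices.\<close>
definition iota :: "real \<Rightarrow> real \<Rightarrow> (nat \<Rightarrow> nat \<Rightarrow> complex) \<Rightarrow> nat \<Rightarrow> nat \<Rightarrow> complex" where
  "iota lam mu x j k = complex_of_real ((rhod lam mu j * rhod lam mu k) powr (1/4)) * x j k"

definition iota_inv :: "real \<Rightarrow> real \<Rightarrow> (nat \<Rightarrow> nat \<Rightarrow> complex) \<Rightarrow> nat \<Rightarrow> nat \<Rightarrow> complex" where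
  "iota_inv lam mu y j k = y j k / complex_of_real ((rhod lam mu j * rhod lam mu k) powr (1/4))"

text \<open>The L_2 semigroup T_t(iota x) = iota (T_t x), applied to y = iota(iota_inv y);
this is the action of T_t on y whenever iota_inv y is bounded (e.g. y of finite rank).\<close>
definition TL2 :: "real \<Rightarrow> real \<Rightarrow> real \<Rightarrow> real \<Rightarrow> real \<Rightarrow> real
              \<Rightarrow> (nat \<Rightarrow> nat \<Rightarrow> complex) \<Rightarrow> nat \<Rightarrow> nat \<Rightarrow> complex" where
  "TL2 r lam mu zp zm t y = iota lam mu (Tmin r lam mu zp zm (iota_inv lam mu y) t)"

definition finite_matrix :: "(nat \<Rightarrow> nat \<Rightarrow> complex) \<Rightarrow> bool" where
  "finite_matrix x \<longleftrightarrow> finite {(j, k). x j k \<noteq> 0}"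

definition Lform :: "real \<Rightarrow> real \<Rightarrow> real \<Rightarrow> real \<Rightarrow> real \<Rightarrow> (nat \<Rightarrow> nat \<Rightarrow> complex) \<Rightarrow> nat \<Rightarrow> nat \<Rightarrow> complex" where
  "Lform r lam mu zp zm x j k =
     \<i> * complex_of_real (zp * (omega r (Suc j) - omega r (Suc k)) + zm * (omega r j - omega r k)) * x j k
     + ((if j = 0 \<or> k = 0 then 0
         else complex_of_real (mu * lam * sqrt (omega r k * omega r j)) * x (j - 1) (k - 1))
        - complex_of_real (mu^2 / 2 * (omega r j + omega r k)) * x j k
        + complex_of_real (mu * lam * sqrt (omega r (Suc j) * omega r (Suc k))) * x (Suc j) (Suc k)
        - complex_of_real (lam^2 / 2 * (omega r (Suc j) + omega r (Suc k))) * x j k)"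

end

theory Submission
  imports Defs "HOL-Real_Asymp.Real_Asymp"
begin


lemma sqrt_le_avg: "0 \<le> a \<Longrightarrow> 0 \<le> b \<Longrightarrow> sqrt (a * b) \<le> (a + b) / 2"
  by (rule arith_geo_mean_sqrt)

locale qds =
  fixes r lam mu zp zm :: real and y :: "nat \<Rightarrow> nat \<Rightarrow> complex" and X :: real
  assumes r_pos: "r > 0" and yX: "\<And>j k. cmod (y j k) \<le> X"
begin

abbreviation "T n t j k \<equiv> Tit r lam mu zp zm y n t j k"
abbreviation "om n \<equiv> omega r n"
definition "g n = lam^2/2 * om (Suc n) + mu^2/2 * om n"
definition "gam j k = g j + g k"
definition "bet j k = cnj (gdiag r lam mu zp zm j) + gdiag r lam mu zp zm k"
definition "Ac j k = (if j = 0 \<or> k = 0 then 0 else mu^2 * sqrt (om j * om k))"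
definition "Bc j k = lam^2 * sqrt (om (Suc j) * om (Suc k))"
definition "Fn n s j k = (if j = 0 \<or> k = 0 then 0
           else complex_of_real (mu^2 * sqrt (omega r j * omega r k)) * T n s (j - 1) (k - 1))
          + complex_of_real (lam^2 * sqrt (omega r (Suc j) * omega r (Suc k))) * T n s (Suc j) (Suc k)"

lemma X_nonneg: "X \<ge> 0" using yX[of 0 0] norm_ge_zero[of "y 0 0"] by linarith

lemma om_nonneg: "om n \<ge> 0"
  using r_pos by (cases n) (auto simp: omega_def)

lemma om_mono: "om n \<le> om (Suc n)"
  using r_pos by (auto simp: omega_def algebra_simps)

lemma om_mono': "m \<le> n \<Longrightarrow> om m \<le> om n"
  by (induction n rule: dec_induct) (auto intro: order_trans om_mono)

lemma g_nonneg: "g n \<ge> 0"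
  unfolding g_def using om_nonneg[of n] om_nonneg[of "Suc n"] by simp

lemma g_mono: "m \<le> n \<Longrightarrow> g m \<le> g n"
  unfolding g_def using om_mono'[of m n] om_mono'[of "Suc m" "Suc n"]
  by (intro add_mono mult_left_mono) auto

lemma gam_nonneg: "gam j k \<ge> 0" unfolding gam_def using g_nonneg[of j] g_nonneg[of k] by simp

lemma Ac_nonneg: "Ac j k \<ge> 0" unfolding Ac_def using om_nonneg[of j] om_nonneg[of k] by auto
lemma Bc_nonneg: "Bc j k \<ge> 0" unfolding Bc_def using om_nonneg[of "Suc j"] om_nonneg[of "Suc k"] by auto

lemma AB_le: "Ac j k + Bc j k \<le> gam j k"
proof -
  have a: "mu^2 * sqrt (om j * om k) \<le> mu^2 * ((om j + om k)/2)"
    by (intro mult_left_mono arith_geo_mean_sqrt om_nonneg) auto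
  have b: "lam^2 * sqrt (om (Suc j) * om (Suc k)) \<le> lam^2 * ((om (Suc j) + om (Suc k))/2)"
    by (intro mult_left_mono arith_geo_mean_sqrt om_nonneg) auto
  have c: "0 \<le> mu^2 * ((om j + om k)/2)" using om_nonneg[of j] om_nonneg[of k] by simp
  show ?thesis unfolding Ac_def Bc_def gam_def g_def using a b c
    by (auto simp: algebra_simps)
qed

lemma E_eq: "cnj (pdiag r lam mu zp zm t j) * pdiag r lam mu zp zm t k = exp (complex_of_real t * bet j k)"
  unfolding pdiag_def bet_def by (simp add: exp_cnj exp_add[symmetric] algebra_simps)

lemma Re_bet: "Re (bet j k) = - gam j k"
  unfolding bet_def gdiag_def gam_def g_def by (simp add: algebra_simps)

lemma norm_E: "cmod (exp (complex_of_real t * bet j k)) = exp (- t * gam j k)"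
  by (simp add: Re_bet)

lemma T0_eq: "T 0 t j k = exp (complex_of_real t * bet j k) * y j k"
  using E_eq[of t j k] by (simp add: ac_simps)

lemma TSuc_eq: "T (Suc n) t j k = exp (complex_of_real t * bet j k) * y j k
   + integral {0..t} (\<lambda>s. exp (complex_of_real (t - s) * bet j k) * Fn n s j k)"
  using E_eq by (simp add: ac_simps Fn_def)

lemma cont_T: "continuous_on {0..b} (\<lambda>s. T n s j k)"
proof (induction n arbitrary: j k b)
  case 0
  show ?case unfolding T0_eq by (intro continuous_intros)
next
  case (Suc n)
  have cF: "continuous_on {0..b} (\<lambda>s. Fn n s j k)" for b
    unfolding Fn_def by (cases "j = 0 \<or> k = 0") (simp_all, (intro continuous_intros Suc.IH)+)
  have eq: "integral {0..t} (\<lambda>s. exp (complex_of_real (t - s) * bet j k) * Fn n s j k)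
      = integral {0..t} (\<lambda>s. exp (- complex_of_real s * bet j k) * Fn n s j k) * exp (complex_of_real t * bet j k)" for t
  proof -
    have "(\<lambda>s. exp (complex_of_real (t - s) * bet j k) * Fn n s j k) =
          (\<lambda>s. exp (- complex_of_real s * bet j k) * Fn n s j k * exp (complex_of_real t * bet j k))"
      by (rule ext) (simp add: exp_add[symmetric] algebra_simps)
    then show ?thesis by simp
  qed
  have ci: "continuous_on {0..b} (\<lambda>t. integral {0..t} (\<lambda>s. exp (- complex_of_real s * bet j k) * Fn n s j k))"
    by (intro indefinite_integral_continuous_1 integrable_continuous_real continuous_intros cF)
  show ?case unfolding TSuc_eq eq
    by (intro continuous_intros ci)
qed

end


context qds begin

definition "D n t j k = T (Suc n) t j k - T n t j k"
definition "Q N t j k = cmod (T 0 t j k) + (\<Sum>m<N. cmod (D m t j k))"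

lemma cont_D: "continuous_on {0..b} (\<lambda>s. D n s j k)"
  unfolding D_def by (intro continuous_intros cont_T)

lemma cont_Q: "continuous_on {0..b} (\<lambda>s. Q n s j k)"
  unfolding Q_def by (intro continuous_intros cont_T cont_D)

lemma cont_Fn: "continuous_on {0..b} (\<lambda>s. Fn n s j k)"
  unfolding Fn_def by (cases "j = 0 \<or> k = 0") (simp_all, (intro continuous_intros cont_T)+)

lemma D0_eq: "D 0 t j k = integral {0..t} (\<lambda>s. exp (complex_of_real (t - s) * bet j k) * Fn 0 s j k)"
  unfolding D_def TSuc_eq T0_eq by simp

lemma DSuc_eq: "D (Suc n) t j k = integral {0..t} (\<lambda>s. exp (complex_of_real (t - s) * bet j k) *
    ((if j = 0 \<or> k = 0 then 0
           else complex_of_real (mu^2 * sqrt (omega r j * omega r k)) * D n s (j - 1) (k - 1))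
          + complex_of_real (lam^2 * sqrt (omega r (Suc j) * omega r (Suc k))) * D n s (Suc j) (Suc k)))"
proof -
  have i1: "(\<lambda>s. exp (complex_of_real (t - s) * bet j k) * Fn m s j k) integrable_on {0..t}" for m
    by (intro integrable_continuous_real continuous_intros cont_Fn)
  have "D (Suc n) t j k = integral {0..t} (\<lambda>s. exp (complex_of_real (t - s) * bet j k) * Fn (Suc n) s j k)
       - integral {0..t} (\<lambda>s. exp (complex_of_real (t - s) * bet j k) * Fn n s j k)"
    unfolding D_def TSuc_eq by simp
  also have "\<dots> = integral {0..t} (\<lambda>s. exp (complex_of_real (t - s) * bet j k) * Fn (Suc n) s j k
        - exp (complex_of_real (t - s) * bet j k) * Fn n s j k)"
    by (rule integral_diff[symmetric]) (rule i1)+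
  also have "\<dots> = integral {0..t} (\<lambda>s. exp (complex_of_real (t - s) * bet j k) *
    ((if j = 0 \<or> k = 0 then 0
           else complex_of_real (mu^2 * sqrt (omega r j * omega r k)) * D n s (j - 1) (k - 1))
          + complex_of_real (lam^2 * sqrt (omega r (Suc j) * omega r (Suc k))) * D n s (Suc j) (Suc k)))"
    by (intro integral_cong) (cases "j = 0 \<or> k = 0"; simp add: Fn_def D_def algebra_simps del: Tit.simps)
  finally show ?thesis .
qed

lemma int_bound:
  assumes "t \<ge> 0" and c1: "continuous_on {0..t} Z1" and c2: "continuous_on {0..t} Z2"
  shows "cmod (integral {0..t} (\<lambda>s. exp (complex_of_real (t - s) * bet j k) *
    ((if j = 0 \<or> k = 0 then 0 else complex_of_real (mu^2 * sqrt (omega r j * omega r k)) * Z1 s)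
     + complex_of_real (lam^2 * sqrt (omega r (Suc j) * omega r (Suc k))) * Z2 s)))
   \<le> integral {0..t} (\<lambda>s. exp (- (t - s) * gam j k) * (Ac j k * cmod (Z1 s) + Bc j k * cmod (Z2 s)))"
proof (rule integral_norm_bound_integral)
  show "(\<lambda>s. exp (complex_of_real (t - s) * bet j k) *
    ((if j = 0 \<or> k = 0 then 0 else complex_of_real (mu^2 * sqrt (omega r j * omega r k)) * Z1 s)
     + complex_of_real (lam^2 * sqrt (omega r (Suc j) * omega r (Suc k))) * Z2 s)) integrable_on {0..t}"
    by (cases "j = 0 \<or> k = 0") (simp_all, (intro integrable_continuous_real continuous_intros c1 c2)+)
  show "(\<lambda>s. exp (- (t - s) * gam j k) * (Ac j k * cmod (Z1 s) + Bc j k * cmod (Z2 s))) integrable_on {0..t}"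
    by (intro integrable_continuous_real continuous_intros c1 c2)
  fix s assume s: "s \<in> {0..t}"
  have "cmod ((if j = 0 \<or> k = 0 then 0 else complex_of_real (mu^2 * sqrt (omega r j * omega r k)) * Z1 s)
     + complex_of_real (lam^2 * sqrt (omega r (Suc j) * omega r (Suc k))) * Z2 s)
     \<le> Ac j k * cmod (Z1 s) + Bc j k * cmod (Z2 s)"
  proof -
    have "cmod (if j = 0 \<or> k = 0 then 0 else complex_of_real (mu^2 * sqrt (omega r j * omega r k)) * Z1 s)
        = Ac j k * cmod (Z1 s)"
      using om_nonneg[of j] om_nonneg[of k] by (auto simp: Ac_def norm_mult norm_of_real simp del: of_real_mult of_real_power)
    moreover have "cmod (complex_of_real (lam^2 * sqrt (omega r (Suc j) * omega r (Suc k))) * Z2 s)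
        = Bc j k * cmod (Z2 s)"
      using om_nonneg[of "Suc j"] om_nonneg[of "Suc k"] by (auto simp: Bc_def norm_mult norm_of_real simp del: of_real_mult of_real_power)
    ultimately show ?thesis by (metis norm_triangle_ineq)
  qed
  then show "cmod (exp (complex_of_real (t - s) * bet j k) *
    ((if j = 0 \<or> k = 0 then 0 else complex_of_real (mu^2 * sqrt (omega r j * omega r k)) * Z1 s)
     + complex_of_real (lam^2 * sqrt (omega r (Suc j) * omega r (Suc k))) * Z2 s))
    \<le> exp (- (t - s) * gam j k) * (Ac j k * cmod (Z1 s) + Bc j k * cmod (Z2 s))"
    unfolding norm_mult norm_E by (intro mult_left_mono) auto
qed

end



lemma exp_int:
  fixes c t :: real assumes "t \<ge> 0"
  shows "integral {0..t} (\<lambda>s. exp (- (t - s) * c) * c) = 1 - exp (- t * c)"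
proof -
  have "((\<lambda>s. exp (- (t - s) * c) * c) has_integral (exp (- (t - t) * c) - exp (- (t - 0) * c))) {0..t}"
  proof (rule fundamental_theorem_of_calculus)
    show "0 \<le> t" by fact
    fix s assume "s \<in> {0..t}"
    have "((\<lambda>s. exp (- (t - s) * c)) has_real_derivative exp (- (t - s) * c) * c) (at s within {0..t})"
      by (auto intro!: derivative_eq_intros)
    then show "((\<lambda>s. exp (- (t - s) * c)) has_vector_derivative exp (- (t - s) * c) * c) (at s within {0..t})"
      by (simp add: has_real_derivative_iff_has_vector_derivative)
  qed
  then have "integral {0..t} (\<lambda>s. exp (- (t - s) * c) * c) = exp (- (t - t) * c) - exp (- (t - 0) * c)"
    by (rule integral_unique)
  then show ?thesis by simp
qed

context qds begin

lemma core':
  assumes "t \<ge> 0"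
  shows "(\<Sum>m<N. cmod (D (Suc m) t j k)) \<le> integral {0..t} (\<lambda>s. exp (- (t - s) * gam j k) *
     (Ac j k * (\<Sum>m<N. cmod (D m s (j - 1) (k - 1))) + Bc j k * (\<Sum>m<N. cmod (D m s (Suc j) (Suc k)))))"
proof -
  have "(\<Sum>m<N. cmod (D (Suc m) t j k)) \<le> (\<Sum>m<N. integral {0..t} (\<lambda>s. exp (- (t - s) * gam j k) *
     (Ac j k * cmod (D m s (j - 1) (k - 1)) + Bc j k * cmod (D m s (Suc j) (Suc k)))))"
    unfolding DSuc_eq by (intro sum_mono int_bound assms cont_D)
  also have "\<dots> = integral {0..t} (\<lambda>s. \<Sum>m<N. exp (- (t - s) * gam j k) *
     (Ac j k * cmod (D m s (j - 1) (k - 1)) + Bc j k * cmod (D m s (Suc j) (Suc k))))"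
    by (rule integral_sum[symmetric]) (auto intro!: integrable_continuous_real continuous_intros cont_D)
  also have "\<dots> = integral {0..t} (\<lambda>s. exp (- (t - s) * gam j k) *
     (Ac j k * (\<Sum>m<N. cmod (D m s (j - 1) (k - 1))) + Bc j k * (\<Sum>m<N. cmod (D m s (Suc j) (Suc k)))))"
    by (intro integral_cong) (simp add: sum_distrib_left sum.distrib algebra_simps)
  finally show ?thesis .
qed

lemma core0:
  assumes "t \<ge> 0"
  shows "cmod (D 0 t j k) \<le> integral {0..t} (\<lambda>s. exp (- (t - s) * gam j k) *
     (Ac j k * cmod (T 0 s (j - 1) (k - 1)) + Bc j k * cmod (T 0 s (Suc j) (Suc k))))"
  unfolding D0_eq Fn_def by (intro int_bound assms cont_T)

lemma coreQ:
  assumes "t \<ge> 0"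
  shows "(\<Sum>m<Suc N. cmod (D m t j k)) \<le> integral {0..t} (\<lambda>s. exp (- (t - s) * gam j k) *
     (Ac j k * Q N s (j - 1) (k - 1) + Bc j k * Q N s (Suc j) (Suc k)))"
proof -
  have "(\<Sum>m<Suc N. cmod (D m t j k)) = cmod (D 0 t j k) + (\<Sum>m<N. cmod (D (Suc m) t j k))"
    by (rule sum.lessThan_Suc_shift)
  also have "\<dots> \<le> integral {0..t} (\<lambda>s. exp (- (t - s) * gam j k) *
     (Ac j k * cmod (T 0 s (j - 1) (k - 1)) + Bc j k * cmod (T 0 s (Suc j) (Suc k))))
    + integral {0..t} (\<lambda>s. exp (- (t - s) * gam j k) *
     (Ac j k * (\<Sum>m<N. cmod (D m s (j - 1) (k - 1))) + Bc j k * (\<Sum>m<N. cmod (D m s (Suc j) (Suc k)))))"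
    by (intro add_mono core0 core' assms)
  also have "\<dots> = integral {0..t} (\<lambda>s. exp (- (t - s) * gam j k) *
     (Ac j k * cmod (T 0 s (j - 1) (k - 1)) + Bc j k * cmod (T 0 s (Suc j) (Suc k)))
    + exp (- (t - s) * gam j k) *
     (Ac j k * (\<Sum>m<N. cmod (D m s (j - 1) (k - 1))) + Bc j k * (\<Sum>m<N. cmod (D m s (Suc j) (Suc k)))))"
    by (rule integral_add[symmetric]; intro integrable_continuous_real continuous_intros cont_D cont_T)
  also have "\<dots> = integral {0..t} (\<lambda>s. exp (- (t - s) * gam j k) *
     (Ac j k * Q N s (j - 1) (k - 1) + Bc j k * Q N s (Suc j) (Suc k)))"
    by (intro integral_cong) (simp add: Q_def algebra_simps del: Tit.simps)
  finally show ?thesis .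
qed

lemma QX: "t \<ge> 0 \<Longrightarrow> Q N t j k \<le> X"
proof (induction N arbitrary: t j k)
  case 0
  have "cmod (T 0 t j k) = exp (- t * gam j k) * cmod (y j k)"
    unfolding T0_eq norm_mult norm_E ..
  also have "\<dots> \<le> 1 * X"
    using 0 gam_nonneg[of j k] by (intro mult_mono yX) auto
  finally show ?case by (simp add: Q_def)
next
  case (Suc N)
  have "Q (Suc N) t j k = cmod (T 0 t j k) + (\<Sum>m<Suc N. cmod (D m t j k))"
    by (simp add: Q_def del: Tit.simps)
  also have "\<dots> \<le> exp (- t * gam j k) * X + integral {0..t} (\<lambda>s. exp (- (t - s) * gam j k) * gam j k * X)"
  proof (rule add_mono)
    show "cmod (T 0 t j k) \<le> exp (- t * gam j k) * X"
      unfolding T0_eq norm_mult norm_E by (intro mult_left_mono yX) auto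
    have "(\<Sum>m<Suc N. cmod (D m t j k)) \<le> integral {0..t} (\<lambda>s. exp (- (t - s) * gam j k) *
     (Ac j k * Q N s (j - 1) (k - 1) + Bc j k * Q N s (Suc j) (Suc k)))"
      by (rule coreQ) fact
    also have "\<dots> \<le> integral {0..t} (\<lambda>s. exp (- (t - s) * gam j k) * gam j k * X)"
    proof (rule integral_le)
      show "(\<lambda>s. exp (- (t - s) * gam j k) * (Ac j k * Q N s (j - 1) (k - 1) + Bc j k * Q N s (Suc j) (Suc k))) integrable_on {0..t}"
        by (intro integrable_continuous_real continuous_intros cont_Q)
      show "(\<lambda>s. exp (- (t - s) * gam j k) * gam j k * X) integrable_on {0..t}"
        by (intro integrable_continuous_real continuous_intros)
      fix s assume s: "s \<in> {0..t}"
      have "Ac j k * Q N s (j - 1) (k - 1) + Bc j k * Q N s (Suc j) (Suc k) \<le> Ac j k * X + Bc j k * X"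
        using s by (intro add_mono mult_left_mono Suc.IH Ac_nonneg Bc_nonneg) auto
      also have "\<dots> \<le> gam j k * X"
        using AB_le[of j k] X_nonneg by (simp add: distrib_right[symmetric] mult_right_mono)
      finally show "exp (- (t - s) * gam j k) * (Ac j k * Q N s (j - 1) (k - 1) + Bc j k * Q N s (Suc j) (Suc k))
          \<le> exp (- (t - s) * gam j k) * gam j k * X"
        by (simp add: mult.assoc)
    qed
    finally show "(\<Sum>m<Suc N. cmod (D m t j k)) \<le> integral {0..t} (\<lambda>s. exp (- (t - s) * gam j k) * gam j k * X)" .
  qed
  also have "integral {0..t} (\<lambda>s. exp (- (t - s) * gam j k) * gam j k * X) = (1 - exp (- t * gam j k)) * X"
    using exp_int[OF Suc.prems, of "gam j k"] by simp
  finally show ?case by (simp add: algebra_simps)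
qed

lemma L1: "t \<ge> 0 \<Longrightarrow> (\<Sum>m<N. cmod (D m t j k)) \<le> gam j k * X * t"
proof (cases N)
  case 0
  assume "t \<ge> 0" then show ?thesis using 0 gam_nonneg[of j k] X_nonneg by simp
next
  case (Suc N')
  assume t: "t \<ge> 0"
  have "(\<Sum>m<N. cmod (D m t j k)) \<le> integral {0..t} (\<lambda>s. exp (- (t - s) * gam j k) *
     (Ac j k * Q N' s (j - 1) (k - 1) + Bc j k * Q N' s (Suc j) (Suc k)))"
    unfolding Suc by (rule coreQ) fact
  also have "\<dots> \<le> integral {0..t} (\<lambda>s. gam j k * X)"
  proof (rule integral_le)
    show "(\<lambda>s. exp (- (t - s) * gam j k) * (Ac j k * Q N' s (j - 1) (k - 1) + Bc j k * Q N' s (Suc j) (Suc k))) integrable_on {0..t}"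
      by (intro integrable_continuous_real continuous_intros cont_Q)
    show "(\<lambda>s. gam j k * X) integrable_on {0..t}" by (intro integrable_continuous_real continuous_intros)
    fix s assume s: "s \<in> {0..t}"
    have "Ac j k * Q N' s (j - 1) (k - 1) + Bc j k * Q N' s (Suc j) (Suc k) \<le> Ac j k * X + Bc j k * X"
      using s by (intro add_mono mult_left_mono QX Ac_nonneg Bc_nonneg) auto
    also have "\<dots> \<le> gam j k * X"
      using AB_le[of j k] X_nonneg by (simp add: distrib_right[symmetric] mult_right_mono)
    finally have a: "Ac j k * Q N' s (j - 1) (k - 1) + Bc j k * Q N' s (Suc j) (Suc k) \<le> gam j k * X" .
    have b: "0 \<le> Ac j k * Q N' s (j - 1) (k - 1) + Bc j k * Q N' s (Suc j) (Suc k)"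
      using Ac_nonneg Bc_nonneg by (auto simp: Q_def intro!: add_nonneg_nonneg mult_nonneg_nonneg sum_nonneg)
    have c: "exp (- (t - s) * gam j k) \<le> 1" using s gam_nonneg[of j k] by (auto simp: mult_nonpos_nonneg)
    show "exp (- (t - s) * gam j k) * (Ac j k * Q N' s (j - 1) (k - 1) + Bc j k * Q N' s (Suc j) (Suc k)) \<le> gam j k * X"
      using mult_mono[OF c a _ b] by simp
  qed
  also have "\<dots> = gam j k * X * t" using t by simp
  finally show ?thesis .
qed

lemma L2: "t \<ge> 0 \<Longrightarrow> (\<Sum>m<N. cmod (D (Suc m) t j k)) \<le> gam j k * gam (Suc j) (Suc k) * X * t^2"
proof -
  assume t: "t \<ge> 0"
  have "(\<Sum>m<N. cmod (D (Suc m) t j k)) \<le> integral {0..t} (\<lambda>s. exp (- (t - s) * gam j k) *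
     (Ac j k * (\<Sum>m<N. cmod (D m s (j - 1) (k - 1))) + Bc j k * (\<Sum>m<N. cmod (D m s (Suc j) (Suc k)))))"
    by (rule core') fact
  also have "\<dots> \<le> integral {0..t} (\<lambda>s. gam j k * gam (Suc j) (Suc k) * X * t)"
  proof (rule integral_le)
    show "(\<lambda>s. exp (- (t - s) * gam j k) * (Ac j k * (\<Sum>m<N. cmod (D m s (j - 1) (k - 1))) + Bc j k * (\<Sum>m<N. cmod (D m s (Suc j) (Suc k))))) integrable_on {0..t}"
      by (intro integrable_continuous_real continuous_intros cont_D)
    show "(\<lambda>s. gam j k * gam (Suc j) (Suc k) * X * t) integrable_on {0..t}" by (intro integrable_continuous_real continuous_intros)
    fix s assume s: "s \<in> {0..t}"
    have g1: "gam (j - 1) (k - 1) \<le> gam (Suc j) (Suc k)"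
      unfolding gam_def by (intro add_mono g_mono) auto
    have "Ac j k * (\<Sum>m<N. cmod (D m s (j - 1) (k - 1))) + Bc j k * (\<Sum>m<N. cmod (D m s (Suc j) (Suc k)))
        \<le> Ac j k * (gam (Suc j) (Suc k) * X * t) + Bc j k * (gam (Suc j) (Suc k) * X * t)"
    proof (intro add_mono mult_left_mono Ac_nonneg Bc_nonneg)
      have "(\<Sum>m<N. cmod (D m s (j - 1) (k - 1))) \<le> gam (j - 1) (k - 1) * X * s" using s by (intro L1) auto
      also have "\<dots> \<le> gam (Suc j) (Suc k) * X * t"
        using s g1 X_nonneg gam_nonneg by (intro mult_mono) auto
      finally show "(\<Sum>m<N. cmod (D m s (j - 1) (k - 1))) \<le> gam (Suc j) (Suc k) * X * t" .
      have "(\<Sum>m<N. cmod (D m s (Suc j) (Suc k))) \<le> gam (Suc j) (Suc k) * X * s" using s by (intro L1) auto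
      also have "\<dots> \<le> gam (Suc j) (Suc k) * X * t"
        using s X_nonneg gam_nonneg by (intro mult_left_mono) (auto intro: mult_nonneg_nonneg)
      finally show "(\<Sum>m<N. cmod (D m s (Suc j) (Suc k))) \<le> gam (Suc j) (Suc k) * X * t" .
    qed
    also have "\<dots> = (Ac j k + Bc j k) * (gam (Suc j) (Suc k) * X * t)" by (simp add: algebra_simps)
    also have "\<dots> \<le> gam j k * (gam (Suc j) (Suc k) * X * t)"
      using AB_le[of j k] X_nonneg gam_nonneg s by (intro mult_right_mono) (auto intro!: mult_nonneg_nonneg)
    finally have a: "Ac j k * (\<Sum>m<N. cmod (D m s (j - 1) (k - 1))) + Bc j k * (\<Sum>m<N. cmod (D m s (Suc j) (Suc k)))
        \<le> gam j k * gam (Suc j) (Suc k) * X * t" by (simp add: mult.assoc)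
    have b: "0 \<le> Ac j k * (\<Sum>m<N. cmod (D m s (j - 1) (k - 1))) + Bc j k * (\<Sum>m<N. cmod (D m s (Suc j) (Suc k)))"
      using Ac_nonneg Bc_nonneg by (auto intro!: add_nonneg_nonneg mult_nonneg_nonneg sum_nonneg)
    have c: "exp (- (t - s) * gam j k) \<le> 1" using s gam_nonneg[of j k] by (auto simp: mult_nonpos_nonneg)
    show "exp (- (t - s) * gam j k) * (Ac j k * (\<Sum>m<N. cmod (D m s (j - 1) (k - 1))) + Bc j k * (\<Sum>m<N. cmod (D m s (Suc j) (Suc k))))
       \<le> gam j k * gam (Suc j) (Suc k) * X * t"
      using mult_mono[OF c a _ b] by simp
  qed
  also have "\<dots> = gam j k * gam (Suc j) (Suc k) * X * t^2" using t by (simp add: power2_eq_square)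
  finally show ?thesis .
qed

end


context qds begin

lemma T_tele: "T n t j k = T 0 t j k + (\<Sum>m<n. D m t j k)"
  by (induction n) (simp_all add: D_def del: Tit.simps)

lemma D_summable: "t \<ge> 0 \<Longrightarrow> summable (\<lambda>m. cmod (D m t j k))"
proof (rule summableI_nonneg_bounded)
  assume t: "t \<ge> 0"
  show "(\<Sum>i<n. cmod (D i t j k)) \<le> X" for n
    using QX[OF t, of n j k] norm_ge_zero[of "T 0 t j k"] unfolding Q_def by linarith
qed (rule norm_ge_zero)

lemma Tmin_eq: assumes t: "t \<ge> 0"
  shows "Tmin r lam mu zp zm y t j k = T 0 t j k + (\<Sum>m. D m t j k)"
proof -
  have s: "summable (\<lambda>m. D m t j k)" by (rule summable_norm_cancel[OF D_summable[OF t]])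
  have "(\<lambda>n. T n t j k) \<longlonglongrightarrow> T 0 t j k + (\<Sum>m. D m t j k)"
  proof -
    have e: "(\<lambda>n. T n t j k) = (\<lambda>n. T 0 t j k + (\<Sum>m<n. D m t j k))" by (rule ext, rule T_tele)
    show ?thesis unfolding e by (intro tendsto_add tendsto_const summable_LIMSEQ s)
  qed
  then show ?thesis unfolding Tmin_def by (rule limI)
qed

lemma Rem: assumes t: "t \<ge> 0"
  shows "cmod (Tmin r lam mu zp zm y t j k - T 1 t j k) \<le> gam j k * gam (Suc j) (Suc k) * X * t^2"
proof -
  have s: "summable (\<lambda>m. D m t j k)" by (rule summable_norm_cancel[OF D_summable[OF t]])
  have s1: "summable (\<lambda>m. cmod (D (Suc m) t j k))"
    using D_summable[OF t, of j k] by (subst summable_Suc_iff)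
  have "Tmin r lam mu zp zm y t j k - T 1 t j k = (\<Sum>m. D (Suc m) t j k)"
    using Tmin_eq[OF t, of j k] T_tele[of 1 t j k] suminf_split_head[OF s] by (simp del: Tit.simps)
  then have "cmod (Tmin r lam mu zp zm y t j k - T 1 t j k) \<le> (\<Sum>m. cmod (D (Suc m) t j k))"
    using summable_norm[OF s1] by (simp del: Tit.simps)
  also have "\<dots> \<le> gam j k * gam (Suc j) (Suc k) * X * t^2"
    by (rule suminf_le_const[OF s1]) (rule L2[OF t])
  finally show ?thesis .
qed

end



lemma exp_quad: fixes z :: complex
  shows "cmod (exp z - 1 - z) \<le> cmod z ^ 2 * exp (cmod z)"
proof -
  have sums: "(\<lambda>k. z ^ (k + 2) /\<^sub>R fact (k + 2)) sums (exp z - (\<Sum>k<2. z ^ k /\<^sub>R fact k))"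
    by (intro sums_split_initial_segment exp_converges)
  have e: "exp z - (\<Sum>k<2. z ^ k /\<^sub>R fact k) = exp z - 1 - z"
    by (simp add: eval_nat_numeral)
  have sn: "summable (\<lambda>k. norm (z ^ (k + 2) /\<^sub>R fact (k + 2)))"
    using summable_norm_exp[of z] by (intro summable_ignore_initial_segment)
  have "cmod (exp z - 1 - z) = norm (\<Sum>k. z ^ (k + 2) /\<^sub>R fact (k + 2))"
    using sums e by (simp add: sums_iff)
  also have "\<dots> \<le> (\<Sum>k. norm (z ^ (k + 2) /\<^sub>R fact (k + 2)))"
    by (rule summable_norm[OF sn])
  also have "\<dots> \<le> (\<Sum>k. cmod z ^ 2 * (cmod z ^ k /\<^sub>R fact k))"
  proof (rule suminf_le)
    show "summable (\<lambda>k. cmod z ^ 2 * (cmod z ^ k /\<^sub>R fact k))"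
      by (intro summable_mult summable_exp_generic)
    show "summable (\<lambda>k. norm (z ^ (k + 2) /\<^sub>R fact (k + 2)))" by (rule sn)
    fix k :: nat
    have f: "fact k \<le> (fact (k + 2) :: real)" by (intro fact_mono) auto
    have "norm (z ^ (k + 2) /\<^sub>R fact (k + 2)) = cmod z ^ 2 * cmod z ^ k / fact (k + 2)"
      by (simp only: norm_scaleR power_add norm_mult norm_power) (simp add: field_simps)
    also have "\<dots> \<le> cmod z ^ 2 * cmod z ^ k / fact k"
      using f by (intro divide_left_mono) (auto intro: mult_pos_pos)
    finally show "norm (z ^ (k + 2) /\<^sub>R fact (k + 2)) \<le> cmod z ^ 2 * (cmod z ^ k /\<^sub>R fact k)"
      by (simp add: divide_inverse)
  qed
  also have "\<dots> = cmod z ^ 2 * exp (cmod z)"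
    using suminf_mult[OF summable_exp_generic[of "cmod z"], of "cmod z ^ 2"] by (simp add: exp_def)
  finally show ?thesis .
qed

lemma exp_lin: fixes z :: complex
  shows "cmod (exp z - 1) \<le> cmod z + cmod z ^ 2 * exp (cmod z)"
  using exp_quad[of z] norm_triangle_ineq[of z "exp z - 1 - z"] by simp




lemma exp_small1:
  fixes z :: complex assumes "cmod z \<le> t * C" "0 \<le> t" "t \<le> 1" "0 \<le> C"
  shows "cmod (exp z - 1) \<le> t * (C + C^2 * exp C)"
proof -
  have a: "cmod z ^ 2 \<le> (t * C)^2" using assms by (intro power_mono) auto
  have b: "(t * C)^2 \<le> t * C^2"
  proof -
    have "t * t \<le> t" using assms by (simp add: mult_left_le_one_le)
    then have "t * t * (C * C) \<le> t * (C * C)" by (rule mult_right_mono) simp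
    then show ?thesis by (simp add: power2_eq_square algebra_simps)
  qed
  have c: "exp (cmod z) \<le> exp C" using assms mult_left_le_one_le[of C t] by auto
  have ab: "cmod z ^ 2 \<le> t * C^2" using a b by linarith
  have "cmod z ^ 2 * exp (cmod z) \<le> (t * C^2) * exp C"
    using ab c assms by (intro mult_mono) auto
  then show ?thesis using exp_lin[of z] assms by (simp add: algebra_simps)
qed

lemma exp_small2:
  fixes z :: complex assumes "cmod z \<le> t * C" "0 \<le> t" "t \<le> 1" "0 \<le> C"
  shows "cmod (exp z - 1 - z) \<le> t^2 * (C^2 * exp C)"
proof -
  have a: "cmod z ^ 2 \<le> (t * C)^2" using assms by (intro power_mono) auto
  have c: "exp (cmod z) \<le> exp C" using assms mult_left_le_one_le[of C t] by auto
  have "cmod z ^ 2 * exp (cmod z) \<le> (t * C)^2 * exp C"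
    using a c by (intro mult_mono) auto
  then show ?thesis using exp_quad[of z] by (simp add: algebra_simps power_mult_distrib)
qed

context qds begin

lemma T1_bound:
  fixes w :: real and xx La Lb :: complex
  assumes t: "0 < t" "t \<le> 1"
  and hx: "complex_of_real w * y j k = xx"
  and hA: "\<And>s. complex_of_real w * (if j = 0 \<or> k = 0 then 0 else complex_of_real (mu^2 * sqrt (omega r j * omega r k)) * T 0 s (j - 1) (k - 1)) = exp (complex_of_real s * bet (j-1) (k-1)) * La"
  and hB: "\<And>s. complex_of_real w * (complex_of_real (lam^2 * sqrt (omega r (Suc j) * omega r (Suc k))) * T 0 s (Suc j) (Suc k)) = exp (complex_of_real s * bet (Suc j) (Suc k)) * Lb"
  defines "C \<equiv> cmod (bet j k) + cmod (bet (j-1) (k-1)) + cmod (bet (Suc j) (Suc k))"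
  shows "cmod (complex_of_real w * T 1 t j k - xx - complex_of_real t * (bet j k * xx + La + Lb))
     \<le> t^2 * (C^2 * exp C * cmod xx + (C + C^2 * exp C) * (cmod La + cmod Lb))"
proof -
  define b where "b = bet j k"
  define b1 where "b1 = bet (j-1) (k-1)"
  define b2 where "b2 = bet (Suc j) (Suc k)"
  have C0: "C \<ge> 0" unfolding C_def by simp
  have Cb: "cmod b \<le> C" "cmod b1 \<le> C" "cmod b2 \<le> C" unfolding C_def b_def b1_def b2_def by auto
  have T1: "T 1 t j k = exp (complex_of_real t * b) * y j k + integral {0..t} (\<lambda>s. exp (complex_of_real (t - s) * b) * Fn 0 s j k)"
    unfolding b_def by (simp only: One_nat_def TSuc_eq)
  have ie: "complex_of_real w * integral {0..t} (\<lambda>s. exp (complex_of_real (t - s) * b) * Fn 0 s j k)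
     = integral {0..t} (\<lambda>s. exp (complex_of_real (t - s) * b + complex_of_real s * b1) * La + exp (complex_of_real (t - s) * b + complex_of_real s * b2) * Lb)"
  proof -
    have "complex_of_real w * integral {0..t} (\<lambda>s. exp (complex_of_real (t - s) * b) * Fn 0 s j k)
       = integral {0..t} (\<lambda>s. exp (complex_of_real (t - s) * b) * Fn 0 s j k * complex_of_real w)"
      by (simp add: mult.commute)
    also have "\<dots> = integral {0..t} (\<lambda>s. exp (complex_of_real (t - s) * b + complex_of_real s * b1) * La + exp (complex_of_real (t - s) * b + complex_of_real s * b2) * Lb)"
    proof (intro integral_cong)
      fix s
      have eq: "Fn 0 s j k * complex_of_real w = exp (complex_of_real s * b1) * La + exp (complex_of_real s * b2) * Lb"
        using hA[of s] hB[of s] unfolding Fn_def b1_def b2_def by (simp add: algebra_simps del: Tit.simps)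
      then show "exp (complex_of_real (t - s) * b) * Fn 0 s j k * complex_of_real w =
          exp (complex_of_real (t - s) * b + complex_of_real s * b1) * La + exp (complex_of_real (t - s) * b + complex_of_real s * b2) * Lb"
        by (simp only: mult.assoc eq exp_add distrib_left)
    qed
    finally show ?thesis .
  qed
  have lin: "complex_of_real t * (La + Lb) = integral {0..t} (\<lambda>s. La + Lb)"
    using t by (simp add: scaleR_conv_of_real)
  define G where "G s = (exp (complex_of_real (t - s) * b + complex_of_real s * b1) - 1) * La + (exp (complex_of_real (t - s) * b + complex_of_real s * b2) - 1) * Lb" for s
  have iG: "integral {0..t} (\<lambda>s. exp (complex_of_real (t - s) * b + complex_of_real s * b1) * La + exp (complex_of_real (t - s) * b + complex_of_real s * b2) * Lb)
      - integral {0..t} (\<lambda>s. La + Lb) = integral {0..t} G"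
  proof -
    have i1: "(\<lambda>s. exp (complex_of_real (t - s) * b + complex_of_real s * b1) * La + exp (complex_of_real (t - s) * b + complex_of_real s * b2) * Lb) integrable_on {0..t}"
      by (intro integrable_continuous_real continuous_intros)
    have i2: "(\<lambda>s. La + Lb) integrable_on {0..t}"
      by (intro integrable_continuous_real continuous_intros)
    show ?thesis unfolding integral_diff[OF i1 i2, symmetric] G_def
      by (intro integral_cong) (simp add: algebra_simps)
  qed
  have main: "complex_of_real w * T 1 t j k - xx - complex_of_real t * (bet j k * xx + La + Lb)
     = xx * (exp (complex_of_real t * b) - 1 - complex_of_real t * b) + integral {0..t} G"
  proof -
    have h1: "complex_of_real w * T 1 t j k = xx * exp (complex_of_real t * b) + complex_of_real w * integral {0..t} (\<lambda>s. exp (complex_of_real (t - s) * b) * Fn 0 s j k)"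
    proof -
      have "complex_of_real w * (exp (complex_of_real t * b) * y j k) = xx * exp (complex_of_real t * b)"
        using hx by (metis mult.commute mult.left_commute)
      then show ?thesis unfolding T1 distrib_left by simp
    qed
    have iA: "integral {0..t} (\<lambda>s. exp (complex_of_real (t - s) * b + complex_of_real s * b1) * La + exp (complex_of_real (t - s) * b + complex_of_real s * b2) * Lb)
       = integral {0..t} G + complex_of_real t * (La + Lb)"
      using iG unfolding diff_eq_eq lin[symmetric] .
    have h2: "complex_of_real w * T 1 t j k = xx * exp (complex_of_real t * b) + (integral {0..t} G + complex_of_real t * (La + Lb))"
      using h1 ie iA by simp
    show ?thesis unfolding h2 b_def by (simp add: algebra_simps)
  qed
  have n1: "cmod (xx * (exp (complex_of_real t * b) - 1 - complex_of_real t * b)) \<le> cmod xx * (t^2 * (C^2 * exp C))"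
    unfolding norm_mult
  proof (intro mult_left_mono exp_small2)
    show "cmod (complex_of_real t * b) \<le> t * C" using t Cb by (simp add: norm_mult mult_left_mono)
  qed (use t C0 in auto)
  have n2: "cmod (integral {0..t} G) \<le> integral {0..t} (\<lambda>s. t * (C + C^2 * exp C) * (cmod La + cmod Lb))"
  proof (rule integral_norm_bound_integral)
    show "G integrable_on {0..t}" unfolding G_def by (intro integrable_continuous_real continuous_intros)
    show "(\<lambda>s. t * (C + C^2 * exp C) * (cmod La + cmod Lb)) integrable_on {0..t}" by (intro integrable_continuous_real continuous_intros)
    fix s assume s: "s \<in> {0..t}"
    have zb: "cmod (complex_of_real (t - s) * b + complex_of_real s * bb) \<le> t * C" if "cmod bb \<le> C" for bb
    proof -
      have "cmod (complex_of_real (t - s) * b + complex_of_real s * bb) \<le> (t - s) * cmod b + s * cmod bb"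
        using s by (metis (no_types, lifting) abs_of_nonneg atLeastAtMost_iff diff_ge_0_iff_ge norm_mult norm_of_real norm_triangle_ineq)
      also have "\<dots> \<le> (t - s) * C + s * C" using s Cb that by (intro add_mono mult_left_mono) auto
      finally show ?thesis by (simp add: algebra_simps)
    qed
    have e1: "cmod (exp (complex_of_real (t - s) * b + complex_of_real s * b1) - 1) \<le> t * (C + C^2 * exp C)"
      by (rule exp_small1[OF zb[OF Cb(2)]]) (use t C0 in auto)
    have e2: "cmod (exp (complex_of_real (t - s) * b + complex_of_real s * b2) - 1) \<le> t * (C + C^2 * exp C)"
      by (rule exp_small1[OF zb[OF Cb(3)]]) (use t C0 in auto)
    have "cmod (G s) \<le> cmod (exp (complex_of_real (t - s) * b + complex_of_real s * b1) - 1) * cmod La + cmod (exp (complex_of_real (t - s) * b + complex_of_real s * b2) - 1) * cmod Lb"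
      unfolding G_def by (metis norm_mult norm_triangle_ineq)
    also have "\<dots> \<le> t * (C + C^2 * exp C) * cmod La + t * (C + C^2 * exp C) * cmod Lb"
      using e1 e2 by (intro add_mono mult_right_mono) auto
    finally show "cmod (G s) \<le> t * (C + C^2 * exp C) * (cmod La + cmod Lb)" by (simp add: algebra_simps)
  qed
  have n2': "integral {0..t} (\<lambda>s. t * (C + C^2 * exp C) * (cmod La + cmod Lb)) = t^2 * ((C + C^2 * exp C) * (cmod La + cmod Lb))"
    using t by (simp add: power2_eq_square)
  show ?thesis unfolding main
    using norm_triangle_ineq[of "xx * (exp (complex_of_real t * b) - 1 - complex_of_real t * b)" "integral {0..t} G"] n1 n2 n2'
    by (simp add: algebra_simps)
qed

end



lemma summable_h: assumes "0 \<le> v" "v < 1"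
  shows "summable (\<lambda>n. (real n + 3)^8 * v^n)"
proof -
  have lim: "(\<lambda>n. norm ((real n + 3)^8) / norm ((real (Suc n) + 3)^8)) \<longlonglongrightarrow> 1"
    by simp real_asymp
  have "conv_radius (\<lambda>n. (real n + 3)^8) = ereal 1"
    by (rule conv_radius_ratio_limit_nonzero[OF refl _ lim]) simp
  then have "ereal (norm v) < conv_radius (\<lambda>n. (real n + 3)^8)" using assms by simp
  then show ?thesis by (rule summable_in_conv_radius)
qed

lemma prod_summable:
  fixes h :: "nat \<Rightarrow> real"
  assumes "summable h" "\<And>n. h n \<ge> 0"
  shows "(\<lambda>(j, k). h j * h k) summable_on UNIV"
proof -
  have hs: "h summable_on UNIV" using assms summable_on_UNIV_nonneg_real_iff by blast
  have "(\<lambda>(j, k). h j * h k) summable_on Sigma UNIV (\<lambda>_. UNIV)"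
  proof (rule summable_on_SigmaI)
    show "((\<lambda>k. case (j, k) of (j, k) \<Rightarrow> h j * h k) has_sum h j * infsum h UNIV) UNIV" for j
      using has_sum_cmult_right[OF has_sum_infsum[OF hs], of "h j"] by simp
    show "(\<lambda>j. h j * infsum h UNIV) summable_on UNIV"
      by (rule summable_on_cmult_left[OF hs])
  qed (use assms in auto)
  then show ?thesis by simp
qed

lemma finite_support_summable:
  fixes f :: "'a \<Rightarrow> real"
  assumes "finite F" "\<And>p. p \<notin> F \<Longrightarrow> f p = 0"
  shows "f summable_on UNIV"
proof -
  have "f summable_on F" using assms by simp
  moreover have "f summable_on F \<longleftrightarrow> f summable_on UNIV"
    by (rule summable_on_cong_neutral) (use assms in auto)
  ultimately show ?thesis by simp
qed




lemma aux1: fixes v :: real shows "(1 - v^2) * v^(2 * Suc j) * ((1 - v^2) * v^(2 * Suc k)) = v^4 * ((1 - v^2) * v^(2*j) * ((1 - v^2) * v^(2*k)))"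
proof -
  have "v^(2 * Suc j) = v^2 * v^(2*j)" "v^(2 * Suc k) = v^2 * v^(2*k)" by (simp_all add: power_add[symmetric])
  then show ?thesis by (simp add: eval_nat_numeral mult_ac)
qed
lemma aux2: fixes v :: real shows "(1 - v^2) * v^(2*j) * ((1 - v^2) * v^(2*k)) = ((1 - v^2) * v^(j+k))^2"
proof -
  have "v^(2*j) * v^(2*k) = (v^(j+k))^2" by (simp add: power_add[symmetric] power_mult[symmetric] algebra_simps)
  then show ?thesis by (simp add: power_mult_distrib power2_eq_square mult_ac)
qed

lemma rhod_pos: "0 < lam \<Longrightarrow> lam < mu \<Longrightarrow> rhod lam mu n > 0"
proof -
  assume a: "0 < lam" "lam < mu"
  have "lam / mu < 1" "0 < lam / mu" using a by auto
  then have "(lam/mu)^2 < 1" by (simp add: power_less_one_iff)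
  then show ?thesis unfolding rhod_def using a by (intro mult_pos_pos) auto
qed

lemma wgt_Suc: assumes "0 < lam" "lam < mu"
  shows "(rhod lam mu (Suc j) * rhod lam mu (Suc k)) powr (1/4) = (lam/mu) * (rhod lam mu j * rhod lam mu k) powr (1/4)"
proof -
  have nu: "0 < lam/mu" using assms by auto
  have e: "rhod lam mu (Suc j) * rhod lam mu (Suc k) = (lam/mu)^4 * (rhod lam mu j * rhod lam mu k)"
    unfolding rhod_def by (rule aux1)
  have p4: "(lam/mu)^4 = (lam/mu) powr 4" using powr_realpow[of "lam/mu" 4] nu by simp
  have p: "((lam/mu)^4) powr (1/4) = lam/mu"
    unfolding p4 powr_powr using assms by simp
  have "(rhod lam mu (Suc j) * rhod lam mu (Suc k)) powr (1/4) = ((lam/mu)^4) powr (1/4) * (rhod lam mu j * rhod lam mu k) powr (1/4)"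
    unfolding e using rhod_pos[OF assms, of j] rhod_pos[OF assms, of k] nu
    by (simp add: powr_mult)
  then show ?thesis unfolding p .
qed

lemma wgt_sq: assumes "0 < lam" "lam < mu"
  shows "((rhod lam mu j * rhod lam mu k) powr (1/4))^2 = (1 - (lam/mu)^2) * (lam/mu)^(j+k)"
proof -
  define a where "a = rhod lam mu j * rhod lam mu k"
  have a0: "a > 0" unfolding a_def using rhod_pos[OF assms] by auto
  have a_eq: "a = ((1 - (lam/mu)^2) * (lam/mu)^(j+k))^2"
    unfolding a_def rhod_def by (rule aux2)
  have "lam/mu < 1" "0 < lam/mu" using assms by auto
  then have "(lam/mu)^2 < 1" by (simp add: power_less_one_iff)
  then have b0: "(1 - (lam/mu)^2) * (lam/mu)^(j+k) \<ge> 0" using assms by simp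
  have "(a powr (1/4))^2 = a powr (1/4) * a powr (1/4)" by (simp add: power2_eq_square)
  also have "\<dots> = a powr (1/2)" by (simp add: powr_add[symmetric])
  also have "\<dots> = sqrt a" using a0 by (simp add: powr_half_sqrt)
  also have "\<dots> = (1 - (lam/mu)^2) * (lam/mu)^(j+k)" unfolding a_eq using b0 by (simp only: real_sqrt_abs abs_of_nonneg)
  finally show ?thesis unfolding a_def .
qed




context qds begin
lemma g_bound: "g n \<le> (lam^2 + mu^2) * (1 + r) * (real n + 1)^2"
proof -
  have o1: "om (Suc n) \<le> (1 + r) * (real n + 1)^2"
  proof -
    have "om (Suc n) = (real n + 1) * (real n + r)" by (simp add: omega_def)
    also have "\<dots> \<le> (real n + 1) * ((1 + r) * (real n + 1))"
      using r_pos by (intro mult_left_mono) (auto simp: algebra_simps)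
    finally show ?thesis by (simp add: power2_eq_square algebra_simps)
  qed
  have "g n \<le> lam^2/2 * om (Suc n) + mu^2/2 * om (Suc n)"
    unfolding g_def using om_mono[of n] by (intro add_left_mono mult_left_mono) auto
  also have "\<dots> = (lam^2 + mu^2)/2 * om (Suc n)" by (simp add: algebra_simps)
  also have "\<dots> \<le> (lam^2 + mu^2)/2 * ((1 + r) * (real n + 1)^2)"
    using o1 by (intro mult_left_mono) auto
  also have "\<dots> \<le> (lam^2 + mu^2) * ((1 + r) * (real n + 1)^2)"
    using r_pos by (intro mult_right_mono) auto
  finally show ?thesis by (simp add: mult.assoc)
qed

lemma gam_bound: "gam (Suc j) (Suc k) \<le> 2 * ((lam^2 + mu^2) * (1 + r)) * ((real j + 3)^2 * (real k + 3)^2)"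
proof -
  define G where "G = (lam^2 + mu^2) * (1 + r)"
  have G0: "G \<ge> 0" unfolding G_def using r_pos by auto
  have a: "g (Suc j) \<le> G * ((real j + 3)^2 * (real k + 3)^2)"
  proof -
    have "g (Suc j) \<le> G * (real j + 2)^2" using g_bound[of "Suc j"] unfolding G_def by (simp add: add.commute add.left_commute)
    also have "\<dots> \<le> G * ((real j + 3)^2 * (real k + 3)^2)"
    proof (intro mult_left_mono G0)
      have "(real j + 2)^2 \<le> (real j + 3)^2" by (intro power_mono) auto
      also have "\<dots> \<le> (real j + 3)^2 * (real k + 3)^2"
        using mult_left_mono[OF one_le_power[of "real k + 3" 2], of "(real j + 3)^2"] by simp
      finally show "(real j + 2)^2 \<le> (real j + 3)^2 * (real k + 3)^2" .
    qed
    finally show ?thesis .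
  qed
  have b: "g (Suc k) \<le> G * ((real j + 3)^2 * (real k + 3)^2)"
  proof -
    have "g (Suc k) \<le> G * (real k + 2)^2" using g_bound[of "Suc k"] unfolding G_def by (simp add: add.commute add.left_commute)
    also have "\<dots> \<le> G * ((real j + 3)^2 * (real k + 3)^2)"
    proof (intro mult_left_mono G0)
      have "(real k + 2)^2 \<le> (real k + 3)^2" by (intro power_mono) auto
      also have "\<dots> \<le> (real j + 3)^2 * (real k + 3)^2"
        using mult_right_mono[OF one_le_power[of "real j + 3" 2], of "(real k + 3)^2"] by simp
      finally show "(real k + 2)^2 \<le> (real j + 3)^2 * (real k + 3)^2" .
    qed
    finally show ?thesis .
  qed
  show ?thesis using a b unfolding gam_def G_def by simp
qed
end




lemma alg6: fixes w a b xx L t :: complex assumes "t \<noteq> 0"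
  shows "(w * a - xx) / t - L = (w * b - xx - t * L) / t + w * (a - b) / t"
  using assms by (simp add: field_simps)

lemma norm6: fixes A D :: complex and w t :: real assumes "t > 0" "w > 0"
  shows "cmod (A / complex_of_real t + complex_of_real w * D / complex_of_real t) \<le> cmod A / t + w * cmod D / t"
proof -
  have "cmod (A / complex_of_real t + complex_of_real w * D / complex_of_real t)
     \<le> cmod (A / complex_of_real t) + cmod (complex_of_real w * D / complex_of_real t)"
    by (rule norm_triangle_ineq)
  also have "\<dots> = cmod A / t + w * cmod D / t"
    using assms by (simp add: norm_divide norm_mult)
  finally show ?thesis .
qed

theorem lemma6p1:
  fixes r lam mu zp zm :: real and x :: "nat \<Rightarrow> nat \<Rightarrow> complex"
  assumes "r > 0" and "0 < lam" and "lam < mu" and "finite_matrix x"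
  shows "(\<forall>\<^sub>F t in at_right 0.
            (\<lambda>(j, k). (cmod ((TL2 r lam mu zp zm t x j k - x j k) / complex_of_real t
                               - Lform r lam mu zp zm x j k))^2) summable_on UNIV)
       \<and> ((\<lambda>t. \<Sum>\<^sub>\<infinity>(j, k). (cmod ((TL2 r lam mu zp zm t x j k - x j k) / complex_of_real t
                               - Lform r lam mu zp zm x j k))^2) \<longlongrightarrow> 0) (at_right 0)"
proof -
  have mu0: "mu > 0" using assms by auto
  define v where "v = lam / mu"
  have v: "0 < v" "v < 1" unfolding v_def using assms by auto
  define W where "W j k = (rhod lam mu j * rhod lam mu k) powr (1/4)" for j k
  have Wpos: "W j k > 0" for j k unfolding W_def using rhod_pos[OF assms(2,3), of j] rhod_pos[OF assms(2,3), of k] by simp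
  have WSuc: "W (Suc j) (Suc k) = v * W j k" for j k unfolding W_def v_def by (rule wgt_Suc[OF assms(2,3)])
  have Wsq: "(W j k)^2 = (1 - v^2) * v^(j+k)" for j k unfolding W_def v_def by (rule wgt_sq[OF assms(2,3)])
  define y where "y = iota_inv lam mu x"
  have yW: "y j k = x j k / complex_of_real (W j k)" for j k unfolding y_def iota_inv_def W_def ..
  have xW: "complex_of_real (W j k) * y j k = x j k" for j k
    unfolding yW using Wpos[of j k] by simp
  define S where "S = {(j, k). x j k \<noteq> 0}"
  have finS: "finite S" using assms(4) unfolding finite_matrix_def S_def .
  define X where "X = (\<Sum>p\<in>S. cmod (y (fst p) (snd p)))"
  have yX: "cmod (y j k) \<le> X" for j k
  proof (cases "(j, k) \<in> S")
    case True
    then show ?thesis unfolding X_def using finS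
      by (metis (no_types, lifting) fst_conv member_le_sum norm_ge_zero snd_conv)
  next
    case False
    then have "y j k = 0" unfolding S_def yW by simp
    then show ?thesis unfolding X_def by (simp add: sum_nonneg)
  qed
  interpret Q: qds r lam mu zp zm y X by unfold_locales (rule assms(1), rule yX)
  have TL2: "TL2 r lam mu zp zm t x j k = complex_of_real (W j k) * Tmin r lam mu zp zm y t j k" for t j k
    unfolding TL2_def iota_def W_def y_def ..
  define La where "La j k = (if j = 0 \<or> k = 0 then 0 else complex_of_real (mu * lam * sqrt (omega r k * omega r j)) * x (j - 1) (k - 1))" for j k
  define Lb where "Lb j k = complex_of_real (mu * lam * sqrt (omega r (Suc j) * omega r (Suc k))) * x (Suc j) (Suc k)" for j k
  have Lf: "Lform r lam mu zp zm x j k = Q.bet j k * x j k + La j k + Lb j k" for j k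
    unfolding Lform_def Q.bet_def gdiag_def La_def Lb_def
    by (simp add: complex_eq_iff algebra_simps add_divide_distrib)
  have hA: "complex_of_real (W j k) * (if j = 0 \<or> k = 0 then 0 else complex_of_real (mu^2 * sqrt (omega r j * omega r k)) * Tit r lam mu zp zm y 0 s (j - 1) (k - 1))
     = exp (complex_of_real s * Q.bet (j-1) (k-1)) * La j k" for j k s
  proof (cases "j = 0 \<or> k = 0")
    case True
    then show ?thesis by (auto simp: La_def)
  next
    case False
    then obtain j' k' where jk: "j = Suc j'" "k = Suc k'" by (metis not0_implies_Suc)
    have sq: "sqrt (omega r (Suc k') * omega r (Suc j')) = sqrt (omega r (Suc j') * omega r (Suc k'))"
      by (simp add: mult.commute)
    show ?thesis unfolding jk using Wpos[of j' k'] mu0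
      by (simp add: La_def sq WSuc yW Q.T0_eq v_def field_simps power2_eq_square del: Tit.simps)
  qed
  have hB: "complex_of_real (W j k) * (complex_of_real (lam^2 * sqrt (omega r (Suc j) * omega r (Suc k))) * Tit r lam mu zp zm y 0 s (Suc j) (Suc k))
     = exp (complex_of_real s * Q.bet (Suc j) (Suc k)) * Lb j k" for j k s
    using Wpos[of j k] mu0 assms(2)
    by (simp add: Lb_def WSuc yW Q.T0_eq v_def field_simps power2_eq_square del: Tit.simps)
  define Cf where "Cf j k = cmod (Q.bet j k) + cmod (Q.bet (j-1) (k-1)) + cmod (Q.bet (Suc j) (Suc k))" for j k
  define K where "K j k = (Cf j k)^2 * exp (Cf j k) * cmod (x j k) + (Cf j k + (Cf j k)^2 * exp (Cf j k)) * (cmod (La j k) + cmod (Lb j k))" for j k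
  define R where "R j k = W j k * Q.gam j k * Q.gam (Suc j) (Suc k) * X" for j k
  have ent: "cmod ((TL2 r lam mu zp zm t x j k - x j k) / complex_of_real t - Lform r lam mu zp zm x j k) \<le> t * (K j k + R j k)"
    if t: "0 < t" "t \<le> 1" for t j k
  proof -
    have b1: "cmod (complex_of_real (W j k) * Tit r lam mu zp zm y 1 t j k - x j k - complex_of_real t * (Q.bet j k * x j k + La j k + Lb j k)) \<le> t^2 * K j k"
      using Q.T1_bound[OF t xW hA hB] unfolding K_def Cf_def .
    have b2: "cmod (Tmin r lam mu zp zm y t j k - Tit r lam mu zp zm y 1 t j k) \<le> Q.gam j k * Q.gam (Suc j) (Suc k) * X * t^2"
      by (rule Q.Rem) (use t in simp)
    have e: "(TL2 r lam mu zp zm t x j k - x j k) / complex_of_real t - Lform r lam mu zp zm x j k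
      = (complex_of_real (W j k) * Tit r lam mu zp zm y 1 t j k - x j k - complex_of_real t * (Q.bet j k * x j k + La j k + Lb j k)) / complex_of_real t
        + complex_of_real (W j k) * (Tmin r lam mu zp zm y t j k - Tit r lam mu zp zm y 1 t j k) / complex_of_real t"
      unfolding TL2 Lf by (rule alg6) (use t in simp)
    have "cmod ((TL2 r lam mu zp zm t x j k - x j k) / complex_of_real t - Lform r lam mu zp zm x j k)
      \<le> cmod (complex_of_real (W j k) * Tit r lam mu zp zm y 1 t j k - x j k - complex_of_real t * (Q.bet j k * x j k + La j k + Lb j k)) / t
        + W j k * cmod (Tmin r lam mu zp zm y t j k - Tit r lam mu zp zm y 1 t j k) / t"
      unfolding e by (rule norm6) (use t Wpos[of j k] in auto)
    also have "\<dots> \<le> t^2 * K j k / t + W j k * (Q.gam j k * Q.gam (Suc j) (Suc k) * X * t^2) / t"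
      using b1 b2 t Wpos[of j k] by (intro add_mono divide_right_mono mult_left_mono) (auto simp del: Tit.simps)
    also have "\<dots> = t * (K j k + R j k)"
      using t by (simp add: R_def power2_eq_square field_simps del: Tit.simps)
    finally show ?thesis .
  qed
  define F where "F = S \<union> (\<lambda>(a, b). (Suc a, Suc b)) ` S \<union> (\<lambda>(a, b). (a - 1, b - 1)) ` S"
  have finF: "finite F" using finS by (simp add: F_def)
  have K0: "K j k = 0" if nF: "(j, k) \<notin> F" for j k
  proof -
    have x0: "x j k = 0" using nF unfolding F_def S_def by auto
    have La0: "La j k = 0"
    proof (cases "j = 0 \<or> k = 0")
      case True thus ?thesis by (simp add: La_def)
    next
      case False
      have "(j - 1, k - 1) \<notin> S"
      proof
        assume "(j - 1, k - 1) \<in> S"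
        then have "(Suc (j - 1), Suc (k - 1)) \<in> F" unfolding F_def by force
        with False nF show False by simp
      qed
      then show ?thesis using False by (simp add: La_def S_def)
    qed
    have Lb0: "Lb j k = 0"
    proof -
      have "(Suc j, Suc k) \<notin> S"
      proof
        assume "(Suc j, Suc k) \<in> S"
        then have "(Suc j - 1, Suc k - 1) \<in> F" unfolding F_def by force
        with nF show False by simp
      qed
      then show ?thesis by (simp add: Lb_def S_def)
    qed
    show ?thesis by (simp add: K_def x0 La0 Lb0)
  qed
  define Gc where "Gc = (lam^2 + mu^2) * (1 + r)"
  define h where "h n = (real n + 3)^8 * v^n" for n
  define Cst where "Cst = (1 - v^2) * X^2 * (16 * Gc^4)"
  have R2: "(R j k)^2 \<le> Cst * (h j * h k)" for j k
  proof -
    have g0: "0 \<le> Q.gam j k" by (rule Q.gam_nonneg)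
    have g1: "Q.gam j k \<le> Q.gam (Suc j) (Suc k)" unfolding Q.gam_def by (intro add_mono Q.g_mono) auto
    have g2: "Q.gam (Suc j) (Suc k) \<le> 2 * Gc * ((real j + 3)^2 * (real k + 3)^2)" unfolding Gc_def using Q.gam_bound by simp
    have "(R j k)^2 = (W j k)^2 * (Q.gam j k * Q.gam (Suc j) (Suc k))^2 * X^2" by (simp add: R_def power_mult_distrib)
    also have "\<dots> \<le> (W j k)^2 * ((2 * Gc * ((real j + 3)^2 * (real k + 3)^2))^2)^2 * X^2"
    proof (intro mult_right_mono mult_left_mono power_mono)
      have "Q.gam j k * Q.gam (Suc j) (Suc k) \<le> Q.gam (Suc j) (Suc k) * Q.gam (Suc j) (Suc k)"
        using g0 g1 by (intro mult_right_mono) auto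
      also have "\<dots> \<le> (2 * Gc * ((real j + 3)^2 * (real k + 3)^2)) * (2 * Gc * ((real j + 3)^2 * (real k + 3)^2))"
        using g0 g1 g2 by (intro mult_mono) auto
      finally show "Q.gam j k * Q.gam (Suc j) (Suc k) \<le> (2 * Gc * ((real j + 3)^2 * (real k + 3)^2))^2"
        by (simp add: power2_eq_square)
    qed (use g0 Q.gam_nonneg[of "Suc j" "Suc k"] in auto)
    also have "\<dots> = Cst * (h j * h k)" unfolding Wsq Cst_def h_def
      by (simp add: power_add power_mult_distrib power_mult[symmetric] algebra_simps)
    finally show ?thesis .
  qed
  have hsum: "summable h" unfolding h_def by (rule summable_h) (use v in auto)
  have h0: "h n \<ge> 0" for n using v by (simp add: h_def)
  have Cst0: "Cst \<ge> 0"
  proof -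
    have "v^2 < 1" using v by (simp add: power_less_one_iff)
    then show ?thesis unfolding Cst_def by simp
  qed
  define B where "B = (\<lambda>(j, k). 2 * (K j k)^2 + 2 * (Cst * (h j * h k)))"
  have Bs: "B summable_on UNIV"
  proof -
    have s1: "(\<lambda>(j, k). 2 * (K j k)^2) summable_on UNIV"
    proof (rule finite_support_summable[OF finF])
      fix p assume "p \<notin> F" then show "(case p of (j, k) \<Rightarrow> 2 * (K j k)^2) = 0"
        by (cases p) (simp add: K0)
    qed
    have s2: "(\<lambda>p. 2 * Cst * (case p of (j, k) \<Rightarrow> h j * h k)) summable_on UNIV"
      by (rule summable_on_cmult_right[OF prod_summable[OF hsum h0]])
    have "B = (\<lambda>p. (case p of (j, k) \<Rightarrow> 2 * (K j k)^2) + 2 * Cst * (case p of (j, k) \<Rightarrow> h j * h k))"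
      by (auto simp: B_def fun_eq_iff)
    then show ?thesis using summable_on_add[OF s1 s2] by simp
  qed
  have B0: "B p \<ge> 0" for p using Cst0 h0 by (cases p) (auto simp: B_def intro!: add_nonneg_nonneg mult_nonneg_nonneg)
  define f where "f t = (\<lambda>(j, k). (cmod ((TL2 r lam mu zp zm t x j k - x j k) / complex_of_real t
                               - Lform r lam mu zp zm x j k))^2)" for t
  have f0: "f t p \<ge> 0" for t p by (cases p) (simp add: f_def)
  have fb: "f t p \<le> t^2 * B p" if t: "0 < t" "t \<le> 1" for t p
  proof (cases p)
    case (Pair j k)
    have c0: "0 \<le> cmod ((TL2 r lam mu zp zm t x j k - x j k) / complex_of_real t - Lform r lam mu zp zm x j k)" by simp
    have "f t p \<le> (t * (K j k + R j k))^2"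
      unfolding Pair f_def by (simp del: Tit.simps) (rule power_mono[OF ent[OF t] c0])
    also have "\<dots> = t^2 * (K j k + R j k)^2" by (simp add: power_mult_distrib)
    also have "\<dots> \<le> t^2 * (2 * (K j k)^2 + 2 * (R j k)^2)"
    proof (intro mult_left_mono)
      have "0 \<le> (K j k - R j k)^2" by simp
      then show "(K j k + R j k)^2 \<le> 2 * (K j k)^2 + 2 * (R j k)^2" by (simp add: power2_eq_square algebra_simps)
    qed simp
    also have "\<dots> \<le> t^2 * B p"
      unfolding Pair B_def using R2[of j k] by (intro mult_left_mono) auto
    finally show ?thesis .
  qed
  have fs: "f t summable_on UNIV" if t: "0 < t" "t \<le> 1" for t
    by (rule summable_on_comparison_test[OF summable_on_cmult_right[OF Bs, of "t^2"]]) (use fb[OF t] f0 in auto)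
  have ev: "\<forall>\<^sub>F t in at_right 0. 0 < t \<and> t \<le> (1::real)"
    unfolding eventually_at_right_field by (rule exI[of _ 1]) auto
  have part1: "\<forall>\<^sub>F t in at_right 0. f t summable_on UNIV"
    by (rule eventually_mono[OF ev]) (use fs in auto)
  have lim: "((\<lambda>t. t^2 * infsum B UNIV) \<longlongrightarrow> 0) (at_right 0)"
  proof -
    have "((\<lambda>t. t^2 * infsum B UNIV) \<longlongrightarrow> 0^2 * infsum B UNIV) (at_right 0)"
      by (intro tendsto_intros)
    then show ?thesis by simp
  qed
  have part2: "((\<lambda>t. infsum (f t) UNIV) \<longlongrightarrow> 0) (at_right 0)"
  proof (rule tendsto_sandwich[OF _ _ tendsto_const lim])
    show "\<forall>\<^sub>F t in at_right 0. 0 \<le> infsum (f t) UNIV"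
      by (rule always_eventually) (use f0 in \<open>auto intro: infsum_nonneg\<close>)
    show "\<forall>\<^sub>F t in at_right 0. infsum (f t) UNIV \<le> t^2 * infsum B UNIV"
    proof (rule eventually_mono[OF ev])
      fix t :: real assume t: "0 < t \<and> t \<le> 1"
      have "infsum (f t) UNIV \<le> infsum (\<lambda>p. t^2 * B p) UNIV"
        by (rule infsum_mono[OF fs summable_on_cmult_right[OF Bs]]) (use t fb in auto)
      also have "\<dots> = t^2 * infsum B UNIV" by (rule infsum_cmult_right) (use Bs in auto)
      finally show "infsum (f t) UNIV \<le> t^2 * infsum B UNIV" .
    qed
  qed
  show ?thesis using part1 part2 unfolding f_def by simp
qed


end
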